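(* Let $Q$ be a groupoid quantale with base locale $A$ and let $X$ be a stably supported $Q$-module with support $\varsigma_X$ and inner product $\langle-,-\rangle$. Then for all $x\in X$ and $q\in Q$, $$\varsigma_X(x)\triangleright q=\langle x,x\rangle1_Q\wedge q.$$
   Context: Let $A$ be a locale. An involutive $A$-$A$-quantale $Q$ is a sup-lattice with unital left and right $A$-actions $a\triangleright q$, $q\triangleleft a$ commuting with each other, an associative join-preserving multiplication with $(a\triangleright x)y=a\triangleright(xy)$, $(x\triangleleft a)y=x(a\triangleright y)$, $(xy)\triangleleft a=x(y\triangleleft a)$, and a join-preserving involution with $x^{**}=x$, $(xy)^*=y^*x^*$, $(a\triangleright x\triangleleft b)^*=b\triangleright x^*\triangleleft a$. A support is a sup-lattice homomorphism $\varsigma_Q:Q\to A$ with $\varsigma_Q(1_Q)=1_A$, $\varsigma_Q(x)\triangleright y\le xx^*y$, $\varsigma_Q(x)\triangleright x=x$; equivariant if $\varsigma_Q(a\triangleright x)=a\wedge\varsigma_Q(x)$. A groupoid quantale is such a $Q$ which is a frame with $(a\triangleright q)\wedge m=a\triangleright(q\wedge m)$, $m\wedge(q\triangleleft a)=(q\wedge m)\triangleleft a$, equipped with an equivariant support and a frame homomorphism $\upsilon:Q\to A$ with $\upsilon(a\triangleright1_Q)=a=\upsilon(1_Q\triangleleft a)$, such that the right adjoint of the multiplication $Q\otimes_AQ\to Q$ preserves joins, and satisfying $\bigvee_{xy\le a}\upsilon(x)\triangleright y=a$ and $\upsilon(a)\triangleright1_Q=\bigvee_{xx^*\le a}x$.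 A $Q$-module is a locale $X$ with a left $Q$-module action $q\cdot x$ and unital left $A$-module structure $a\triangleright x$ with $(a\triangleright q)\cdot x=a\triangleright(q\cdot x)$, $(q\triangleleft a)\cdot x=q\cdot(a\triangleright x)$, $a\triangleright(x\wedge y)=(a\triangleright x)\wedge y$. A pre-Hilbert $Q$-module has $\langle-,-\rangle:X\times X\to Q$ with $\langle q\cdot x,y\rangle=q\langle x,y\rangle$, $a\triangleright\langle x,1_X\rangle=\langle a\triangleright x,1_X\rangle$, $\langle\bigvee x_\alpha,y\rangle=\bigvee\langle x_\alpha,y\rangle$, $\langle x,y\rangle=\langle y,x\rangle^*$. It is supported if equipped with a monotone $\varsigma_X:X\to A$ with $\varsigma_X(1_X)=1_A$, $\varsigma_X(x)\triangleright1_X\le\langle x,x\rangle\cdot1_X$, $\varsigma_X(x)\triangleright x=x$; stably supported if moreover $\varsigma_X(q\cdot x)\le\varsigma_Q(q)$. *)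

theory Defs
  imports Main
begin

unbundle lattice_syntax

text \<open>Conventions: locales and sup-lattices are complete lattices; 1 of a lattice is its top.\<close>

definition frame_law :: "'a::complete_lattice itself \<Rightarrow> bool" where
  "frame_law _ \<longleftrightarrow> (\<forall>(a::'a) S. a \<sqinter> Sup S = (SUP b\<in>S. a \<sqinter> b))"

definition sup_hom :: "('a::complete_lattice \<Rightarrow> 'b::complete_lattice) \<Rightarrow> bool" where
  "sup_hom f \<longleftrightarrow> (\<forall>S. f (Sup S) = (SUP s\<in>S. f s))"

definition frame_hom :: "('a::complete_lattice \<Rightarrow> 'b::complete_lattice) \<Rightarrow> bool" where
  "frame_hom f \<longleftrightarrow> sup_hom f \<and> f top = top \<and> (\<forall>x y. f (x \<sqinter> y) = f x \<sqinter> f y)"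

definition left_A_module :: "('a::complete_lattice \<Rightarrow> 'm::complete_lattice \<Rightarrow> 'm) \<Rightarrow> bool" where
  "left_A_module act \<longleftrightarrow>
     (\<forall>S m. act (Sup S) m = (SUP a\<in>S. act a m)) \<and>
     (\<forall>a M. act a (Sup M) = (SUP m\<in>M. act a m)) \<and>
     (\<forall>a b m. act (a \<sqinter> b) m = act a (act b m)) \<and>
     (\<forall>m. act top m = m)"

definition right_A_module :: "('m::complete_lattice \<Rightarrow> 'a::complete_lattice \<Rightarrow> 'm) \<Rightarrow> bool" where
  "right_A_module act \<longleftrightarrow>
     (\<forall>S m. act m (Sup S) = (SUP a\<in>S. act m a)) \<and>
     (\<forall>a M. act (Sup M) a = (SUP m\<in>M. act m a)) \<and>
     (\<forall>a b m. act m (a \<sqinter> b) = act (act m a) b) \<and>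
     (\<forall>m. act m top = m)"

definition involutive_AA_quantale ::
  "('a::complete_lattice \<Rightarrow> 'q::complete_lattice \<Rightarrow> 'q) \<Rightarrow> ('q \<Rightarrow> 'a \<Rightarrow> 'q) \<Rightarrow>
   ('q \<Rightarrow> 'q \<Rightarrow> 'q) \<Rightarrow> ('q \<Rightarrow> 'q) \<Rightarrow> bool" where
  "involutive_AA_quantale lact ract mult invol \<longleftrightarrow>
     frame_law TYPE('a) \<and>
     left_A_module lact \<and> right_A_module ract \<and>
     (\<forall>a b q. ract (lact a q) b = lact a (ract q b)) \<and>
     (\<forall>x y z. mult (mult x y) z = mult x (mult y z)) \<and>
     (\<forall>X y. mult (Sup X) y = (SUP x\<in>X. mult x y)) \<and>
     (\<forall>x Y. mult x (Sup Y) = (SUP y\<in>Y. mult x y)) \<and>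
     (\<forall>a x y. mult (lact a x) y = lact a (mult x y)) \<and>
     (\<forall>a x y. mult (ract x a) y = mult x (lact a y)) \<and>
     (\<forall>a x y. ract (mult x y) a = mult x (ract y a)) \<and>
     sup_hom invol \<and>
     (\<forall>x. invol (invol x) = x) \<and>
     (\<forall>x y. invol (mult x y) = mult (invol y) (invol x)) \<and>
     (\<forall>a b x. invol (ract (lact a x) b) = ract (lact b (invol x)) a)"

definition is_support ::
  "('a::complete_lattice \<Rightarrow> 'q::complete_lattice \<Rightarrow> 'q) \<Rightarrow> ('q \<Rightarrow> 'q \<Rightarrow> 'q) \<Rightarrow> ('q \<Rightarrow> 'q) \<Rightarrow>
   ('q \<Rightarrow> 'a) \<Rightarrow> bool" where
  "is_support lact mult invol supp \<longleftrightarrow>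
     sup_hom supp \<and> supp top = top \<and>
     (\<forall>x y. lact (supp x) y \<le> mult (mult x (invol x)) y) \<and>
     (\<forall>x. lact (supp x) x = x)"

definition equivariant_support ::
  "('a::complete_lattice \<Rightarrow> 'q::complete_lattice \<Rightarrow> 'q) \<Rightarrow> ('q \<Rightarrow> 'a) \<Rightarrow> bool" where
  "equivariant_support lact supp \<longleftrightarrow> (\<forall>a x. supp (lact a x) = a \<sqinter> supp x)"

text \<open>The tensor product Q \<otimes>_A Q represented (Joyal--Tierney) as the sup-lattice of
  A-balanced tensor ideals of Q \<times> Q, ordered by inclusion.\<close>
definition tensor_ideal ::
  "('a::complete_lattice \<Rightarrow> 'q::complete_lattice \<Rightarrow> 'q) \<Rightarrow> ('q \<Rightarrow> 'a \<Rightarrow> 'q) \<Rightarrow> ('q \<times> 'q) set \<Rightarrow> bool" where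
  "tensor_ideal lact ract C \<longleftrightarrow>
     (\<forall>x y x' y'. (x, y) \<in> C \<and> x' \<le> x \<and> y' \<le> y \<longrightarrow> (x', y') \<in> C) \<and>
     (\<forall>S y. (\<forall>s\<in>S. (s, y) \<in> C) \<longrightarrow> (Sup S, y) \<in> C) \<and>
     (\<forall>x S. (\<forall>s\<in>S. (x, s) \<in> C) \<longrightarrow> (x, Sup S) \<in> C) \<and>
     (\<forall>x a y. (ract x a, y) \<in> C \<longleftrightarrow> (x, lact a y) \<in> C)"

definition tensor_join ::
  "('a::complete_lattice \<Rightarrow> 'q::complete_lattice \<Rightarrow> 'q) \<Rightarrow> ('q \<Rightarrow> 'a \<Rightarrow> 'q) \<Rightarrow>
   ('q \<times> 'q) set set \<Rightarrow> ('q \<times> 'q) set" where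
  "tensor_join lact ract \<C> = \<Inter>{C. tensor_ideal lact ract C \<and> \<Union>\<C> \<subseteq> C}"

text \<open>Right adjoint of the multiplication Q \<otimes>_A Q \<rightarrow> Q.\<close>
definition mult_radj :: "('q::complete_lattice \<Rightarrow> 'q \<Rightarrow> 'q) \<Rightarrow> 'q \<Rightarrow> ('q \<times> 'q) set" where
  "mult_radj mult z = {(x, y). mult x y \<le> z}"

definition groupoid_quantale ::
  "('a::complete_lattice \<Rightarrow> 'q::complete_lattice \<Rightarrow> 'q) \<Rightarrow> ('q \<Rightarrow> 'a \<Rightarrow> 'q) \<Rightarrow>
   ('q \<Rightarrow> 'q \<Rightarrow> 'q) \<Rightarrow> ('q \<Rightarrow> 'q) \<Rightarrow> ('q \<Rightarrow> 'a) \<Rightarrow> ('q \<Rightarrow> 'a) \<Rightarrow> bool" where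
  "groupoid_quantale lact ract mult invol supp ups \<longleftrightarrow>
     involutive_AA_quantale lact ract mult invol \<and>
     frame_law TYPE('q) \<and>
     (\<forall>a q m. lact a q \<sqinter> m = lact a (q \<sqinter> m)) \<and>
     (\<forall>a q m. m \<sqinter> ract q a = ract (q \<sqinter> m) a) \<and>
     is_support lact mult invol supp \<and> equivariant_support lact supp \<and>
     frame_hom ups \<and>
     (\<forall>a. ups (lact a top) = a \<and> ups (ract top a) = a) \<and>
     (\<forall>Z. mult_radj mult (Sup Z) = tensor_join lact ract (mult_radj mult ` Z)) \<and>
     (\<forall>a. (SUP (x, y)\<in>{(x, y). mult x y \<le> a}. lact (ups x) y) = a) \<and>
     (\<forall>a. lact (ups a) top = Sup {x. mult x (invol x) \<le> a})"

definition Q_module ::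
  "('a::complete_lattice \<Rightarrow> 'q::complete_lattice \<Rightarrow> 'q) \<Rightarrow> ('q \<Rightarrow> 'a \<Rightarrow> 'q) \<Rightarrow> ('q \<Rightarrow> 'q \<Rightarrow> 'q) \<Rightarrow>
   ('q \<Rightarrow> 'x::complete_lattice \<Rightarrow> 'x) \<Rightarrow> ('a \<Rightarrow> 'x \<Rightarrow> 'x) \<Rightarrow> bool" where
  "Q_module lact ract mult act aact \<longleftrightarrow>
     frame_law TYPE('x) \<and>
     (\<forall>p q x. act (mult p q) x = act p (act q x)) \<and>
     (\<forall>Q x. act (Sup Q) x = (SUP q\<in>Q. act q x)) \<and>
     (\<forall>q X. act q (Sup X) = (SUP x\<in>X. act q x)) \<and>
     left_A_module aact \<and>
     (\<forall>a q x. act (lact a q) x = aact a (act q x)) \<and>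
     (\<forall>a q x. act (ract q a) x = act q (aact a x)) \<and>
     (\<forall>a x y. aact a (x \<sqinter> y) = aact a x \<sqinter> y)"

definition pre_Hilbert ::
  "('a::complete_lattice \<Rightarrow> 'q::complete_lattice \<Rightarrow> 'q) \<Rightarrow> ('q \<Rightarrow> 'q \<Rightarrow> 'q) \<Rightarrow> ('q \<Rightarrow> 'q) \<Rightarrow>
   ('q \<Rightarrow> 'x::complete_lattice \<Rightarrow> 'x) \<Rightarrow> ('a \<Rightarrow> 'x \<Rightarrow> 'x) \<Rightarrow> ('x \<Rightarrow> 'x \<Rightarrow> 'q) \<Rightarrow> bool" where
  "pre_Hilbert lact mult invol act aact ip \<longleftrightarrow>
     (\<forall>q x y. ip (act q x) y = mult q (ip x y)) \<and>
     (\<forall>a x. lact a (ip x top) = ip (aact a x) top) \<and>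
     (\<forall>X y. ip (Sup X) y = (SUP x\<in>X. ip x y)) \<and>
     (\<forall>x y. ip x y = invol (ip y x))"

definition supported_module ::
  "('q::complete_lattice \<Rightarrow> 'x::complete_lattice \<Rightarrow> 'x) \<Rightarrow> ('a::complete_lattice \<Rightarrow> 'x \<Rightarrow> 'x) \<Rightarrow>
   ('x \<Rightarrow> 'x \<Rightarrow> 'q) \<Rightarrow> ('x \<Rightarrow> 'a) \<Rightarrow> bool" where
  "supported_module act aact ip suppX \<longleftrightarrow>
     mono suppX \<and> suppX top = top \<and>
     (\<forall>x. aact (suppX x) top \<le> act (ip x x) top) \<and>
     (\<forall>x. aact (suppX x) x = x)"

definition stably_supported_module ::
  "('a::complete_lattice \<Rightarrow> 'q::complete_lattice \<Rightarrow> 'q) \<Rightarrow> ('q \<Rightarrow> 'a \<Rightarrow> 'q) \<Rightarrow>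
   ('q \<Rightarrow> 'q \<Rightarrow> 'q) \<Rightarrow> ('q \<Rightarrow> 'q) \<Rightarrow> ('q \<Rightarrow> 'a) \<Rightarrow>
   ('q \<Rightarrow> 'x::complete_lattice \<Rightarrow> 'x) \<Rightarrow> ('a \<Rightarrow> 'x \<Rightarrow> 'x) \<Rightarrow> ('x \<Rightarrow> 'x \<Rightarrow> 'q) \<Rightarrow> ('x \<Rightarrow> 'a) \<Rightarrow> bool" where
  "stably_supported_module lact ract mult invol supp act aact ip suppX \<longleftrightarrow>
     Q_module lact ract mult act aact \<and>
     pre_Hilbert lact mult invol act aact ip \<and>
     supported_module act aact ip suppX \<and>
     (\<forall>q x. suppX (act q x) \<le> supp q)"

end

theory Submission
  imports Defs
begin

lemma supmono: assumes "\<forall>S. f (Sup S) = (SUP s\<in>S. (f s::'b::complete_lattice))"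
  and "(a::'a::complete_lattice) \<le> b" shows "f a \<le> f b"
proof -
  have "f (Sup {a,b}) = sup (f a) (f b)" using assms(1)[rule_format, of "{a,b}"] by simp
  moreover have "Sup {a,b} = b" using assms(2) by (simp add: sup_absorb2)
  ultimately show ?thesis by (metis sup.cobounded1)
qed

theorem corollary4p2:
  fixes lact :: "'a::complete_lattice \<Rightarrow> 'q::complete_lattice \<Rightarrow> 'q"
    and ract :: "'q \<Rightarrow> 'a \<Rightarrow> 'q"
    and mult :: "'q \<Rightarrow> 'q \<Rightarrow> 'q"
    and invol :: "'q \<Rightarrow> 'q"
    and supp :: "'q \<Rightarrow> 'a"
    and ups :: "'q \<Rightarrow> 'a"
    and act :: "'q \<Rightarrow> 'x::complete_lattice \<Rightarrow> 'x"
    and aact :: "'a \<Rightarrow> 'x \<Rightarrow> 'x"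
    and ip :: "'x \<Rightarrow> 'x \<Rightarrow> 'q"
    and suppX :: "'x \<Rightarrow> 'a"
  assumes "groupoid_quantale lact ract mult invol supp ups"
    and "stably_supported_module lact ract mult invol supp act aact ip suppX"
  shows "\<forall>x q. lact (suppX x) q = inf (mult (ip x x) top) q"
proof (intro allI)
  fix x q
  have G: "involutive_AA_quantale lact ract mult invol"
    "\<forall>a q m. lact a q \<sqinter> m = lact a (q \<sqinter> m)"
    "is_support lact mult invol supp"
    using assms(1) unfolding groupoid_quantale_def apply - apply (elim conjE, assumption)+ done
  have LA: "left_A_module lact" and MA: "\<forall>x y z. mult (mult x y) z = mult x (mult y z)"
    and MLEFT: "\<forall>X y. mult (Sup X) y = (SUP x\<in>X. mult x y)"
    and MR: "\<forall>x Y. mult x (Sup Y) = (SUP y\<in>Y. mult x y)"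
    and MLACT: "\<forall>a x y. mult (lact a x) y = lact a (mult x y)"
    and INV: "sup_hom invol"
    using G(1) unfolding involutive_AA_quantale_def apply - apply (elim conjE, assumption)+ done
  have SUPP: "\<forall>x y. lact (supp x) y \<le> mult (mult x (invol x)) y"
    using G(3) unfolding is_support_def apply - apply (elim conjE, assumption)+ done
  have QM: "Q_module lact ract mult act aact" and PH: "pre_Hilbert lact mult invol act aact ip"
    and SM: "supported_module act aact ip suppX" and ST: "\<forall>q x. suppX (act q x) \<le> supp q"
    using assms(2) unfolding stably_supported_module_def apply - apply (elim conjE, assumption)+ done
  have AA: "left_A_module aact" and AQ: "\<forall>Q x. act (Sup Q) x = (SUP q\<in>Q. act q x)"
    using QM unfolding Q_module_def apply - apply (elim conjE, assumption)+ done
  have IP1: "\<forall>q x y. ip (act q x) y = mult q (ip x y)"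
    and IP2: "\<forall>a x. lact a (ip x top) = ip (aact a x) top"
    and IP3: "\<forall>X y. ip (Sup X) y = (SUP x\<in>X. ip x y)"
    and IP4: "\<forall>x y. ip x y = invol (ip y x)"
    using PH unfolding pre_Hilbert_def apply - apply (elim conjE, assumption)+ done
  have SX: "mono suppX" "\<forall>x. aact (suppX x) top \<le> act (ip x x) top" "\<forall>x. aact (suppX x) x = x"
    using SM unfolding supported_module_def apply - apply (elim conjE, assumption)+ done
  have lactmono1: "lact a m \<le> lact b m" if "a \<le> b" for a b m
    using supmono[of "\<lambda>a. lact a m", OF _ that] LA unfolding left_A_module_def by auto
  have lactmono2: "lact a m \<le> lact a n" if "m \<le> n" for a m n
    using supmono[of "\<lambda>m. lact a m", OF _ that] LA unfolding left_A_module_def by auto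
  have aactmono2: "aact a m \<le> aact a n" if "m \<le> n" for a m n
    using supmono[of "\<lambda>m. aact a m", OF _ that] AA unfolding left_A_module_def by auto
  have multmono1: "mult m y \<le> mult n y" if "m \<le> n" for m n y
    using supmono[of "\<lambda>m. mult m y", OF _ that] MLEFT by auto
  have multmono2: "mult y m \<le> mult y n" if "m \<le> n" for m n y
    using supmono[of "\<lambda>m. mult y m", OF _ that] MR by auto
  have ipmono1: "ip m y \<le> ip n y" if "m \<le> n" for m n y
    using supmono[of "\<lambda>m. ip m y", OF _ that] IP3 by auto
  have invmono: "invol m \<le> invol n" if "m \<le> n" for m n
    using supmono[of invol, OF _ that] INV unfolding sup_hom_def by auto
  have ipmono2: "ip y m \<le> ip y n" if "m \<le> n" for m n y
  proof -
    have "invol (ip m y) \<le> invol (ip n y)" using invmono ipmono1 that by blast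
    thus ?thesis by (simp only: IP4[rule_format, of y m] IP4[rule_format, of y n])
  qed
  have split: "lact a m = lact a top \<sqinter> m" for a m
    using G(2)[rule_format, of a top m] by simp
  define s where "s = suppX x"
  define p where "p = ip x x"
  have le1: "lact s top \<le> mult p top"
  proof -
    have "x \<le> aact s top" using SX(3) aactmono2[of x top s] unfolding s_def by simp
    also have "\<dots> \<le> act p top" unfolding s_def p_def by (rule SX(2)[rule_format])
    finally have "x \<le> act p top" .
    hence "suppX x \<le> suppX (act p top)" using SX(1) by (rule monoD[rotated])
    also have "\<dots> \<le> supp p" using ST by blast
    finally have "s \<le> supp p" unfolding s_def .
    hence "lact s top \<le> lact (supp p) top" by (rule lactmono1)
    also have "\<dots> \<le> mult (mult p (invol p)) top" using SUPP by blast
    also have "\<dots> = mult p (mult (invol p) top)" by (rule MA[rule_format])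
    also have "\<dots> \<le> mult p top" by (rule multmono2) simp
    finally show ?thesis .
  qed
  have le2: "mult p top \<le> lact s top"
  proof -
    have "p = ip (aact s x) x" using SX(3) unfolding p_def s_def by simp
    also have "\<dots> \<le> ip (aact s x) top" by (rule ipmono2) simp
    also have "\<dots> = lact s (ip x top)" by (rule IP2[rule_format, symmetric])
    finally have "mult p top \<le> mult (lact s (ip x top)) top" by (rule multmono1)
    also have "\<dots> = lact s (mult (ip x top) top)" by (rule MLACT[rule_format])
    also have "\<dots> \<le> lact s top" by (rule lactmono2) simp
    finally show ?thesis .
  qed
  show "lact (suppX x) q = inf (mult (ip x x) top) q"
    using split[of "suppX x" q] le1 le2 unfolding s_def p_def by (simp add: order_antisym)
qed

end
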